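(* Let $f_0,f_1$ be finitely supported probability distributions on a connected, locally finite graph $G$. Let $\gamma^{(1)},\gamma^{(2)}$ be geodesics in $G$ such that $(e_0(\gamma^{(i)}),e_1(\gamma^{(i)}))\in\mathcal{C}(f_0,f_1)$ for $i=1,2$. Then there are no integers $k_1,k_2$ with $0\le k_i\le L(\gamma^{(i)})-1$ such that both $\gamma^{(1)}(k_1)=\gamma^{(2)}(k_2+1)$ and $\gamma^{(1)}(k_1+1)=\gamma^{(2)}(k_2)$.
   Context: $d$ is the graph distance of $G$. A path of length $n$ is a sequence of vertices $\gamma(0),\dots,\gamma(n)$ with $\gamma(i),\gamma(i+1)$ adjacent; $L(\gamma)=n$, $e_0(\gamma)=\gamma(0)$, $e_1(\gamma)=\gamma(n)$; it is a geodesic if $n=d(\gamma(0),\gamma(n))$. A probability distribution is a function $f:G\to[0,\infty)$ with $\sum_x f(x)=1$. $\Pi(f_0,f_1)$ is the set of couplings ($\pi:G\times G\to[0,\infty)$ with marginals $f_0,f_1$), $\Pi_1(f_0,f_1)$ the set of couplings minimizing $\sum_{x,y}d(x,y)\pi(x,y)$, and $\mathcal{C}(f_0,f_1)=\{(x,y)\in G\times G:\pi(x,y)>0\text{ for some }\pi\in\Pi_1(f_0,f_1)\}$. *)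

theory Defs
  imports "HOL-Analysis.Analysis"
begin

definition graph :: "('v \<Rightarrow> 'v \<Rightarrow> bool) \<Rightarrow> bool" where
  "graph E \<longleftrightarrow> (\<forall>x y. E x y \<longrightarrow> E y x) \<and> (\<forall>x. \<not> E x x)"

definition is_path :: "('v \<Rightarrow> 'v \<Rightarrow> bool) \<Rightarrow> (nat \<Rightarrow> 'v) \<Rightarrow> nat \<Rightarrow> bool" where
  "is_path E g n \<longleftrightarrow> (\<forall>i<n. E (g i) (g (Suc i)))"

definition connected_graph :: "('v \<Rightarrow> 'v \<Rightarrow> bool) \<Rightarrow> bool" where
  "connected_graph E \<longleftrightarrow> (\<forall>x y. \<exists>g n. is_path E g n \<and> g 0 = x \<and> g n = y)"

definition locally_finite :: "('v \<Rightarrow> 'v \<Rightarrow> bool) \<Rightarrow> bool" where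
  "locally_finite E \<longleftrightarrow> (\<forall>x. finite {y. E x y})"

definition gdist :: "('v \<Rightarrow> 'v \<Rightarrow> bool) \<Rightarrow> 'v \<Rightarrow> 'v \<Rightarrow> nat" where
  "gdist E x y = (LEAST n. \<exists>g. is_path E g n \<and> g 0 = x \<and> g n = y)"

definition geodesic :: "('v \<Rightarrow> 'v \<Rightarrow> bool) \<Rightarrow> (nat \<Rightarrow> 'v) \<Rightarrow> nat \<Rightarrow> bool" where
  "geodesic E g n \<longleftrightarrow> is_path E g n \<and> n = gdist E (g 0) (g n)"

definition prob_dist :: "('v \<Rightarrow> real) \<Rightarrow> bool" where
  "prob_dist f \<longleftrightarrow> (\<forall>x. 0 \<le> f x) \<and> (f has_sum 1) UNIV"

definition fin_supp :: "('v \<Rightarrow> real) \<Rightarrow> bool" where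
  "fin_supp f \<longleftrightarrow> finite {x. f x \<noteq> 0}"

definition couplings :: "('v \<Rightarrow> real) \<Rightarrow> ('v \<Rightarrow> real) \<Rightarrow> ('v \<times> 'v \<Rightarrow> real) set" where
  "couplings f0 f1 = {p. (\<forall>z. 0 \<le> p z)
      \<and> (\<forall>x. ((\<lambda>y. p (x, y)) has_sum f0 x) UNIV)
      \<and> (\<forall>y. ((\<lambda>x. p (x, y)) has_sum f1 y) UNIV)}"

definition tcost :: "('v \<Rightarrow> 'v \<Rightarrow> bool) \<Rightarrow> ('v \<times> 'v \<Rightarrow> real) \<Rightarrow> real" where
  "tcost E p = (\<Sum>\<^sub>\<infinity>z. real (gdist E (fst z) (snd z)) * p z)"

definition opt_couplings :: "('v \<Rightarrow> 'v \<Rightarrow> bool) \<Rightarrow> ('v \<Rightarrow> real) \<Rightarrow> ('v \<Rightarrow> real) \<Rightarrow> ('v \<times> 'v \<Rightarrow> real) set" where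
  "opt_couplings E f0 f1 = {p \<in> couplings f0 f1. \<forall>q \<in> couplings f0 f1. tcost E p \<le> tcost E q}"

definition opt_support :: "('v \<Rightarrow> 'v \<Rightarrow> bool) \<Rightarrow> ('v \<Rightarrow> real) \<Rightarrow> ('v \<Rightarrow> real) \<Rightarrow> ('v \<times> 'v) set" where
  "opt_support E f0 f1 = {(x, y). \<exists>p \<in> opt_couplings E f0 f1. 0 < p (x, y)}"

end

theory Submission
  imports Defs
begin

lemma path_concat:
  assumes "is_path E a m" "is_path E b l" "a m = b 0"
  shows "is_path E (\<lambda>i. if i \<le> m then a i else b (i - m)) (m + l)"
  unfolding is_path_def
proof (intro allI impI)
  fix i assume i: "i < m + l"
  show "E (if i \<le> m then a i else b (i - m)) (if Suc i \<le> m then a (Suc i) else b (Suc i - m))"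
  proof (cases "i < m")
    case True then show ?thesis using assms(1) unfolding is_path_def by auto
  next
    case False
    then have "i - m < l" "Suc i - m = Suc (i - m)" using i by auto
    then show ?thesis using assms False unfolding is_path_def
      by (cases "i = m") auto
  qed
qed

lemma path_sub:
  assumes "is_path E g n" "i \<le> j" "j \<le> n"
  shows "is_path E (\<lambda>t. g (i + t)) (j - i)"
  using assms unfolding is_path_def by auto

lemma gdist_le:
  assumes "is_path E g n"
  shows "gdist E (g 0) (g n) \<le> n"
  unfolding gdist_def using assms by (intro Least_le) blast

lemma gdist_bound:
  assumes "is_path E g1 n1" "is_path E g2 n2" "k1 \<le> n1" "Suc k2 \<le> n2"
    "g1 k1 = g2 (Suc k2)"
  shows "gdist E (g1 0) (g2 n2) \<le> k1 + (n2 - Suc k2)"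
proof -
  define a where "a = (\<lambda>t. g1 (0 + t))"
  define b where "b = (\<lambda>t. g2 (Suc k2 + t))"
  have pa: "is_path E a (k1 - 0)" unfolding a_def by (rule path_sub[OF assms(1)]) (use assms in auto)
  have pb: "is_path E b (n2 - Suc k2)" unfolding b_def by (rule path_sub[OF assms(2)]) (use assms in auto)
  define c where "c = (\<lambda>i. if i \<le> k1 then a i else b (i - k1))"
  have P: "is_path E c (k1 + (n2 - Suc k2))"
    unfolding c_def using path_concat[OF pa[simplified] pb] assms(5) by (simp add: a_def b_def)
  have "c (k1 + (n2 - Suc k2)) = g2 n2"
    using assms by (cases "n2 - Suc k2 = 0") (auto simp: a_def b_def c_def)
  moreover have "c 0 = g1 0" by (simp add: a_def c_def)
  ultimately show ?thesis using gdist_le[OF P] by simp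
qed

lemma term_le:
  fixes f :: "'a \<Rightarrow> real"
  assumes "(f has_sum s) UNIV" "\<And>x. 0 \<le> f x"
  shows "f y \<le> s"
proof -
  have "(f has_sum f y) {y}" using has_sum_finite[of "{y}" f] by simp
  from has_sum_mono_neutral[OF this assms(1)] assms(2) show ?thesis by auto
qed

lemma coupling_finite:
  assumes "p \<in> couplings f0 f1" "fin_supp f0" "fin_supp f1"
  shows "finite {z. p z \<noteq> 0}"
proof -
  have "{z. p z \<noteq> 0} \<subseteq> {x. f0 x \<noteq> 0} \<times> {y. f1 y \<noteq> 0}"
  proof
    fix z assume z: "z \<in> {z. p z \<noteq> 0}"
    obtain x y where zz: "z = (x, y)" by (cases z)
    have nn: "\<And>z. 0 \<le> p z" using assms(1) unfolding couplings_def by auto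
    have "p (x,y) \<le> f0 x"
      using term_le[of "\<lambda>y. p (x,y)" "f0 x" y] assms(1) nn unfolding couplings_def by auto
    moreover have "p (x,y) \<le> f1 y"
      using term_le[of "\<lambda>x. p (x,y)" "f1 y" x] assms(1) nn unfolding couplings_def by auto
    moreover have "p (x,y) > 0" using z nn[of z] zz by auto
    ultimately show "z \<in> {x. f0 x \<noteq> 0} \<times> {y. f1 y \<noteq> 0}" using zz by auto
  qed
  moreover have "finite ({x. f0 x \<noteq> 0} \<times> {y. f1 y \<noteq> 0})"
    using assms(2,3) unfolding fin_supp_def by auto
  ultimately show ?thesis by (rule finite_subset)
qed

lemma tcost_has_sum:
  assumes "p \<in> couplings f0 f1" "fin_supp f0" "fin_supp f1"
  shows "((\<lambda>z. real (gdist E (fst z) (snd z)) * p z) has_sum tcost E p) UNIV"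
proof -
  have fin: "finite {z. p z \<noteq> 0}" by (rule coupling_finite[OF assms])
  have "(\<lambda>z. real (gdist E (fst z) (snd z)) * p z) summable_on UNIV"
    by (rule summable_on_cong_neutral[where S="{z. p z \<noteq> 0}", THEN iffD1])
       (use fin in auto)
  then show ?thesis unfolding tcost_def by simp
qed

lemma has_sum_half:
  fixes f :: "'a \<Rightarrow> real"
  assumes "(f has_sum s) A" shows "((\<lambda>x. f x / 2) has_sum (s / 2)) A"
  using has_sum_cmult_right[OF assms, of "1/2"] by simp

lemma single_has_sum:
  "((\<lambda>z. if z = a then (c::real) else 0) has_sum c) UNIV"
  by (rule has_sum_finite_neutralI[where B="{a}"]) auto

lemma single_row:
  "((\<lambda>y. if (x, y) = (u, v) then (c::real) else 0) has_sum (if x = u then c else 0)) UNIV"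
  by (rule has_sum_finite_neutralI[where B="{v}"]) (auto split: if_splits)

lemma single_col:
  "((\<lambda>x. if (x, y) = (u, v) then (c::real) else 0) has_sum (if y = v then c else 0)) UNIV"
  by (rule has_sum_finite_neutralI[where B="{u}"]) (auto split: if_splits)

theorem theorem2p11:
  fixes E :: "'v \<Rightarrow> 'v \<Rightarrow> bool"
    and f0 f1 :: "'v \<Rightarrow> real"
    and g1 g2 :: "nat \<Rightarrow> 'v" and n1 n2 :: nat
  assumes "graph E" and "connected_graph E" and "locally_finite E"
    and "prob_dist f0" and "prob_dist f1" and "fin_supp f0" and "fin_supp f1"
    and "geodesic E g1 n1" and "geodesic E g2 n2"
    and "(g1 0, g1 n1) \<in> opt_support E f0 f1"
    and "(g2 0, g2 n2) \<in> opt_support E f0 f1"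
  shows "\<not> (\<exists>k1 k2. k1 < n1 \<and> k2 < n2 \<and>
            g1 k1 = g2 (Suc k2) \<and> g1 (Suc k1) = g2 k2)"
proof
  assume "\<exists>k1 k2. k1 < n1 \<and> k2 < n2 \<and> g1 k1 = g2 (Suc k2) \<and> g1 (Suc k1) = g2 k2"
  then obtain k1 k2 where k: "k1 < n1" "k2 < n2" "g1 k1 = g2 (Suc k2)" "g1 (Suc k1) = g2 k2"
    by blast
  define d where "d = (\<lambda>z. real (gdist E (fst z) (snd z)))"
  define x1 where "x1 = g1 0"
  define y1 where "y1 = g1 n1"
  define x2 where "x2 = g2 0"
  define y2 where "y2 = g2 n2"
  have pg1: "is_path E g1 n1" and dg1: "n1 = gdist E x1 y1"
    using assms(8) unfolding geodesic_def x1_def y1_def by auto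
  have pg2: "is_path E g2 n2" and dg2: "n2 = gdist E x2 y2"
    using assms(9) unfolding geodesic_def x2_def y2_def by auto
  have b1: "gdist E x1 y2 \<le> k1 + (n2 - Suc k2)"
    unfolding x1_def y2_def by (rule gdist_bound[OF pg1 pg2]) (use k in auto)
  have b2: "gdist E x2 y1 \<le> k2 + (n1 - Suc k1)"
    unfolding x2_def y1_def by (rule gdist_bound[OF pg2 pg1]) (use k in auto)
  have dineq: "d (x1, y2) + d (x2, y1) < d (x1, y1) + d (x2, y2)"
    unfolding d_def using b1 b2 k dg1 dg2 by simp
  obtain p1 where p1: "p1 \<in> opt_couplings E f0 f1" "0 < p1 (x1, y1)"
    using assms(10) unfolding opt_support_def x1_def y1_def by auto
  obtain p2 where p2: "p2 \<in> opt_couplings E f0 f1" "0 < p2 (x2, y2)"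
    using assms(11) unfolding opt_support_def x2_def y2_def by auto
  have c1: "p1 \<in> couplings f0 f1" and c2: "p2 \<in> couplings f0 f1"
    using p1 p2 unfolding opt_couplings_def by auto
  have nn1: "\<And>z. 0 \<le> p1 z" and nn2: "\<And>z. 0 \<le> p2 z"
    using c1 c2 unfolding couplings_def by auto
  define e where "e = min (p1 (x1, y1)) (p2 (x2, y2)) / 4"
  have epos: "e > 0" unfolding e_def using p1 p2 by simp
  define h where "h = (\<lambda>z. (if z = (x1, y2) then e else 0) + (if z = (x2, y1) then e else 0)
     + (if z = (x1, y1) then - e else 0) + (if z = (x2, y2) then - e else 0))"
  define q where "q = (\<lambda>z. p1 z / 2 + p2 z / 2 + h z)"
  have qnn: "0 \<le> q z" for z
  proof -
    have a: "p1 (x1,y1) \<ge> 4 * e" "p2 (x2,y2) \<ge> 4*e" unfolding e_def by auto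
    have hb: "h z \<ge> -2*e" unfolding h_def using epos by simp
    have hc: "z \<noteq> (x1,y1) \<Longrightarrow> z \<noteq> (x2,y2) \<Longrightarrow> h z \<ge> 0" unfolding h_def using epos by simp
    show ?thesis
    proof (cases "z = (x1,y1) \<or> z = (x2,y2)")
      case True then show ?thesis using a hb nn1[of z] nn2[of z] by (auto simp: q_def)
    next
      case False then show ?thesis using hc nn1[of z] nn2[of z] by (auto simp: q_def)
    qed
  qed
  have qrow: "((\<lambda>y. q (x, y)) has_sum f0 x) UNIV" for x
  proof -
    have r1: "((\<lambda>y. p1 (x, y)) has_sum f0 x) UNIV" using c1 unfolding couplings_def by auto
    have r2: "((\<lambda>y. p2 (x, y)) has_sum f0 x) UNIV" using c2 unfolding couplings_def by auto
    have "((\<lambda>y. p1 (x, y) / 2 + p2 (x, y) / 2 + h (x, y)) has_sum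
       (f0 x / 2 + f0 x / 2 + ((if x = x1 then e else 0) + (if x = x2 then e else 0)
        + (if x = x1 then - e else 0) + (if x = x2 then - e else 0)))) UNIV"
      unfolding h_def
      by (rule has_sum_add[OF has_sum_add[OF has_sum_half[OF r1] has_sum_half[OF r2]] has_sum_add[OF has_sum_add[OF has_sum_add[OF single_row single_row] single_row] single_row]])
    moreover have "(if x = x1 then e else 0) + (if x = x2 then e else 0)
        + (if x = x1 then - e else 0) + (if x = x2 then - e else 0) = 0" by simp
    ultimately show ?thesis unfolding q_def by simp
  qed
  have qcol: "((\<lambda>x. q (x, y)) has_sum f1 y) UNIV" for y
  proof -
    have r1: "((\<lambda>x. p1 (x, y)) has_sum f1 y) UNIV" using c1 unfolding couplings_def by auto
    have r2: "((\<lambda>x. p2 (x, y)) has_sum f1 y) UNIV" using c2 unfolding couplings_def by auto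
    have "((\<lambda>x. p1 (x, y) / 2 + p2 (x, y) / 2 + h (x, y)) has_sum
       (f1 y / 2 + f1 y / 2 + ((if y = y2 then e else 0) + (if y = y1 then e else 0)
        + (if y = y1 then - e else 0) + (if y = y2 then - e else 0)))) UNIV"
      unfolding h_def
      by (rule has_sum_add[OF has_sum_add[OF has_sum_half[OF r1] has_sum_half[OF r2]] has_sum_add[OF has_sum_add[OF has_sum_add[OF single_col single_col] single_col] single_col]])
    moreover have "(if y = y2 then e else 0) + (if y = y1 then e else 0)
        + (if y = y1 then - e else 0) + (if y = y2 then - e else 0) = 0" by simp
    ultimately show ?thesis unfolding q_def by simp
  qed
  have cq: "q \<in> couplings f0 f1" unfolding couplings_def using qnn qrow qcol by auto
  have t1: "((\<lambda>z. d z * p1 z) has_sum tcost E p1) UNIV"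
    unfolding d_def by (rule tcost_has_sum[OF c1 assms(6,7)])
  have t2: "((\<lambda>z. d z * p2 z) has_sum tcost E p2) UNIV"
    unfolding d_def by (rule tcost_has_sum[OF c2 assms(6,7)])
  have sd: "((\<lambda>z. d z * (if z = a then c else 0)) has_sum (d a * c)) UNIV" for a c
  proof -
    have "((\<lambda>z. if z = a then d a * c else 0) has_sum (d a * c)) UNIV" by (rule single_has_sum)
    then show ?thesis by (rule has_sum_cong[THEN iffD1, rotated]) auto
  qed
  have "((\<lambda>z. (d z * p1 z) / 2 + (d z * p2 z) / 2 + (d z * (if z = (x1, y2) then e else 0)
      + d z * (if z = (x2, y1) then e else 0) + d z * (if z = (x1, y1) then - e else 0)
      + d z * (if z = (x2, y2) then - e else 0))) has_sum
      (tcost E p1 / 2 + tcost E p2 / 2 + (d (x1,y2) * e + d (x2,y1) * e + d (x1,y1) * (-e)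
        + d (x2,y2) * (-e)))) UNIV"
    by (rule has_sum_add[OF has_sum_add[OF has_sum_half[OF t1] has_sum_half[OF t2]] has_sum_add[OF has_sum_add[OF has_sum_add[OF sd sd] sd] sd]])
  note hh1 = this
  have hh2: "((\<lambda>z. d z * q z) has_sum tcost E q) UNIV"
    unfolding d_def by (rule tcost_has_sum[OF cq assms(6,7)])

  have tq: "tcost E q = tcost E p1 / 2 + tcost E p2 / 2 + (d (x1,y2) * e + d (x2,y1) * e + d (x1,y1) * (-e)
        + d (x2,y2) * (-e))"
  proof -
    have "(\<lambda>z. d z * q z) = (\<lambda>z. (d z * p1 z) / 2 + (d z * p2 z) / 2 + (d z * (if z = (x1, y2) then e else 0)
      + d z * (if z = (x2, y1) then e else 0) + d z * (if z = (x1, y1) then - e else 0)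
      + d z * (if z = (x2, y2) then - e else 0)))"
      unfolding q_def h_def by (rule ext) (simp only: distrib_left times_divide_eq_right)
    then have "((\<lambda>z. d z * q z) has_sum (tcost E p1 / 2 + tcost E p2 / 2 + (d (x1,y2) * e + d (x2,y1) * e + d (x1,y1) * (-e)
        + d (x2,y2) * (-e)))) UNIV" using hh1 by simp
    then show ?thesis using hh2 has_sum_unique by blast
  qed
  have "tcost E p1 \<le> tcost E q" "tcost E p2 \<le> tcost E q"
    using p1 p2 cq unfolding opt_couplings_def by auto
  moreover have "e * (d (x1, y2) + d (x2, y1)) < e * (d (x1, y1) + d (x2, y2))"
    using dineq epos by simp
  ultimately show False using tq by (simp add: algebra_simps)
qed

end
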